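(* Let $X\subseteq\{1,\dots,n\}$ and $x\in X$. Let $D(X,x)$ be the complex with \[ D(X,x)_i=\bigoplus_{(x_0,\dots,x_i)}\mathcal M_{X,\{x,x_0,\dots,x_i\}}\qquad(i\geq 0), \] the sum over all tuples of distinct elements of $X-\{x\}$, whose differential $\delta_i$ (for $i\geq 1$) sends the $(x_0,\dots,x_i)$-summand to the $(x_0,\dots,x_{i-1})$-summand via the map $\mathcal M_{X,\{x,x_0,\dots,x_i\}}\to\mathcal M_{X,\{x,x_0,\dots,x_{i-1}\}}$ induced by the inclusions $M_{\{x,x_0,\dots,x_i\}}\subseteq M_{\{x,x_0,\dots,x_{i-1}\}}$ and $J_{X-\{x,x_0,\dots,x_i\}}\subseteq J_{X-\{x,x_0,\dots,x_{i-1}\}}$, and with augmentation $\delta_0\colon D(X,x)_0\to\mathcal B_{X,x}$ induced on each summand by $M_{\{x,x_0\}}\subseteq B_{X,x}$ and $J_{X-\{x,x_0\}}\subseteq J_{X-\{x\}}$. Then $D(X,x)\to\mathcal B_{X,x}$ is a resolution, and so is $\mathbb 1\otimes_{\mathcal P_n}D(X,x)\to\mathbb 1\otimes_{\mathcal P_n}\mathcal B_{X,x}$.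
   Context: $R$ is a commutative ring, $\delta\in R$, and $\mathcal P_n=\mathcal P_n(R,\delta)$ is the partition algebra: the free $R$-module on set partitions ("diagrams") of $\{-n,\dots,-1,1,\dots,n\}$ (negative = left nodes, positive = right nodes), with product by stacking, taking the induced partition on outer nodes, and multiplying by $\delta$ for each component consisting only of middle nodes. $\mathbb 1$ is the trivial right module $R$ on which permutation diagrams (blocks all of the form $\{-i,j\}$) act as the identity and other diagrams as $0$. For $Z\subseteq\{1,\dots,n\}$, $J_Z$ is the left ideal spanned by diagrams in which among the right nodes labelled by $Z$ there is a singleton block or two distinct nodes in the same block. $B_{X,x}$ is the left submodule spanned by diagrams in which the right node $x$ lies in the same block as some other element of $X$, and $\mathcal B_{X,x}=B_{X,x}/(B_{X,x}\cap J_{X-\{x\}})$. For $Y\subseteq X$, $M_Y$ is the span of diagrams in which all right nodes in $Y$ lie in one block, and $\mathcal M_{X,Y}=M_Y/(M_Y\cap J_{X-Y})$. *)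

theory Defs
  imports "HOL-Library.Disjoint_Sets"
begin

type_synonym diagram = "int set set"

text \<open>Nodes: left nodes -n..-1 (negative), right nodes 1..n (positive).\<close>
definition nodes :: "nat \<Rightarrow> int set" where
  "nodes n = {i. i \<noteq> 0 \<and> \<bar>i\<bar> \<le> int n}"

definition diagrams :: "nat \<Rightarrow> diagram set" where
  "diagrams n = {d. partition_on (nodes n) d}"

definition blk :: "diagram \<Rightarrow> int \<Rightarrow> int \<Rightarrow> bool" where
  "blk d a b \<longleftrightarrow> (\<exists>B\<in>d. a \<in> B \<and> b \<in> B)"

text \<open>Stacking d1 (left) and d2 (right): layer 0 = left nodes of d1,
  layer 1 = middle nodes (right nodes of d1 = left nodes of d2), layer 2 = right nodes of d2.\<close>
definition emb1 :: "int \<Rightarrow> nat \<times> int" where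
  "emb1 a = (if a < 0 then (0, a) else (1, a))"

definition emb2 :: "int \<Rightarrow> nat \<times> int" where
  "emb2 a = (if a < 0 then (1, - a) else (2, a))"

definition outer :: "int \<Rightarrow> nat \<times> int" where
  "outer a = (if a < 0 then (0, a) else (2, a))"

definition stack_conn :: "diagram \<Rightarrow> diagram \<Rightarrow> ((nat \<times> int) \<times> (nat \<times> int)) set" where
  "stack_conn d1 d2 =
     ({(emb1 a, emb1 b) | a b. blk d1 a b} \<union> {(emb2 a, emb2 b) | a b. blk d2 a b})\<^sup>+"

definition diag_comp :: "nat \<Rightarrow> diagram \<Rightarrow> diagram \<Rightarrow> diagram" where
  "diag_comp n d1 d2 =
     {{b \<in> nodes n. (outer a, outer b) \<in> stack_conn d1 d2} | a. a \<in> nodes n}"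

definition loops :: "nat \<Rightarrow> diagram \<Rightarrow> diagram \<Rightarrow> nat" where
  "loops n d1 d2 = card {stack_conn d1 d2 `` {(1, j)} | j.
      j \<in> {1..int n} \<and> (\<forall>b \<in> nodes n. ((1, j), outer b) \<notin> stack_conn d1 d2)}"

text \<open>An element of a direct sum (indexed by 'i) of copies of P_n(R,delta) is a function
  'i \<times> diagram \<Rightarrow> R (coefficients on the diagram basis).  Left action of a diagram e:\<close>
definition dact :: "nat \<Rightarrow> 'r::comm_ring_1 \<Rightarrow> diagram \<Rightarrow> ('i \<times> diagram \<Rightarrow> 'r) \<Rightarrow> ('i \<times> diagram \<Rightarrow> 'r)" where
  "dact n \<delta> e f = (\<lambda>(t, g). \<Sum>d \<in> {d \<in> diagrams n. diag_comp n e d = g}. \<delta> ^ loops n e d * f (t, d))"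

text \<open>Trivial module 1: permutation diagrams act by 1, others by 0.\<close>
definition perm_diagram :: "nat \<Rightarrow> diagram \<Rightarrow> bool" where
  "perm_diagram n d \<longleftrightarrow> d \<in> diagrams n \<and>
     (\<forall>B\<in>d. \<exists>i j. i \<in> {1..int n} \<and> j \<in> {1..int n} \<and> B = {-i, j})"

definition triv :: "nat \<Rightarrow> diagram \<Rightarrow> 'r::comm_ring_1" where
  "triv n d = (if perm_diagram n d then 1 else 0)"

inductive_set rspan :: "('a \<Rightarrow> 'r::comm_ring_1) set \<Rightarrow> ('a \<Rightarrow> 'r) set" for S where
  zero: "(\<lambda>_. 0) \<in> rspan S"
| gen: "v \<in> S \<Longrightarrow> v \<in> rspan S"
| add: "u \<in> rspan S \<Longrightarrow> v \<in> rspan S \<Longrightarrow> (\<lambda>a. u a + v a) \<in> rspan S"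
| smult: "v \<in> rspan S \<Longrightarrow> (\<lambda>a. r * v a) \<in> rspan S"

text \<open>Functions supported in S: the R-span of the basis elements in S.\<close>
definition supp_in :: "'a set \<Rightarrow> ('a \<Rightarrow> 'r::zero) set" where
  "supp_in S = {f. \<forall>a. f a \<noteq> 0 \<longrightarrow> a \<in> S}"

definition ksum :: "('a \<Rightarrow> 'r::comm_ring_1) set \<Rightarrow> ('a \<Rightarrow> 'r) set \<Rightarrow> ('a \<Rightarrow> 'r) set" where
  "ksum K L = {(\<lambda>a. u a + v a) | u v. u \<in> K \<and> v \<in> L}"

text \<open>For a module A/K, the module 1 \<otimes>_{P_n} (A/K) is A/(K + span{e.a - eps(e) a}).\<close>
definition triv_rel :: "nat \<Rightarrow> 'r::comm_ring_1 \<Rightarrow> ('i \<times> diagram \<Rightarrow> 'r) set \<Rightarrow> ('i \<times> diagram \<Rightarrow> 'r) set" where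
  "triv_rel n \<delta> A = rspan {(\<lambda>a. dact n \<delta> e v a - triv n e * v a) | e v. e \<in> diagrams n \<and> v \<in> A}"

definition tensor_triv_ker :: "nat \<Rightarrow> 'r::comm_ring_1 \<Rightarrow> ('i \<times> diagram \<Rightarrow> 'r) set \<Rightarrow> ('i \<times> diagram \<Rightarrow> 'r) set \<Rightarrow> ('i \<times> diagram \<Rightarrow> 'r) set" where
  "tensor_triv_ker n \<delta> A K = ksum K (triv_rel n \<delta> A)"

section \<open>Exactness of sequences of subquotients A/K (maps given on representatives)\<close>

definition sq_exact :: "('a \<Rightarrow> 'r::comm_ring_1) set \<Rightarrow> ('b \<Rightarrow> 'r) set \<Rightarrow> ('b \<Rightarrow> 'r) set \<Rightarrow>
    ('c \<Rightarrow> 'r) set \<Rightarrow> (('a \<Rightarrow> 'r) \<Rightarrow> ('b \<Rightarrow> 'r)) \<Rightarrow> (('b \<Rightarrow> 'r) \<Rightarrow> ('c \<Rightarrow> 'r)) \<Rightarrow> bool" where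
  "sq_exact A1 A2 K2 K3 f g \<longleftrightarrow>
     (\<forall>u\<in>A1. g (f u) \<in> K3) \<and>
     (\<forall>v\<in>A2. g v \<in> K3 \<longrightarrow> (\<exists>u\<in>A1. (\<lambda>a. v a - f u a) \<in> K2))"

definition sq_surj :: "('a \<Rightarrow> 'r::comm_ring_1) set \<Rightarrow> ('b \<Rightarrow> 'r) set \<Rightarrow> ('b \<Rightarrow> 'r) set \<Rightarrow>
    (('a \<Rightarrow> 'r) \<Rightarrow> ('b \<Rightarrow> 'r)) \<Rightarrow> bool" where
  "sq_surj A1 A2 K2 f \<longleftrightarrow> (\<forall>v\<in>A2. \<exists>u\<in>A1. (\<lambda>a. v a - f u a) \<in> K2)"

definition Jset :: "int set \<Rightarrow> diagram \<Rightarrow> bool" where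
  "Jset Z d \<longleftrightarrow> (\<exists>z\<in>Z. {z} \<in> d) \<or> (\<exists>z1\<in>Z. \<exists>z2\<in>Z. z1 \<noteq> z2 \<and> blk d z1 z2)"

definition Bset :: "int set \<Rightarrow> int \<Rightarrow> diagram \<Rightarrow> bool" where
  "Bset X x d \<longleftrightarrow> (\<exists>y\<in>X. y \<noteq> x \<and> blk d x y)"

definition Mset :: "int set \<Rightarrow> diagram \<Rightarrow> bool" where
  "Mset Y d \<longleftrightarrow> (\<exists>B\<in>d. Y \<subseteq> B)"

definition tuples :: "int set \<Rightarrow> int \<Rightarrow> nat \<Rightarrow> int list set" where
  "tuples X x i = {t. length t = Suc i \<and> distinct t \<and> set t \<subseteq> X - {x}}"

text \<open>D_i = (sum of M_{x,t}) / (sum of M_{x,t} \<inter> J_{X-{x,t}}), presented as carrier/kernel.\<close>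
definition D_car :: "nat \<Rightarrow> int set \<Rightarrow> int \<Rightarrow> nat \<Rightarrow> (int list \<times> diagram \<Rightarrow> 'r::comm_ring_1) set" where
  "D_car n X x i = supp_in {(t, d). t \<in> tuples X x i \<and> d \<in> diagrams n \<and> Mset (insert x (set t)) d}"

definition D_ker :: "nat \<Rightarrow> int set \<Rightarrow> int \<Rightarrow> nat \<Rightarrow> (int list \<times> diagram \<Rightarrow> 'r::comm_ring_1) set" where
  "D_ker n X x i = supp_in {(t, d). t \<in> tuples X x i \<and> d \<in> diagrams n \<and>
       Mset (insert x (set t)) d \<and> Jset (X - insert x (set t)) d}"

definition B_car :: "nat \<Rightarrow> int set \<Rightarrow> int \<Rightarrow> (unit \<times> diagram \<Rightarrow> 'r::comm_ring_1) set" where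
  "B_car n X x = supp_in {(u, d). d \<in> diagrams n \<and> Bset X x d}"

definition B_ker :: "nat \<Rightarrow> int set \<Rightarrow> int \<Rightarrow> (unit \<times> diagram \<Rightarrow> 'r::comm_ring_1) set" where
  "B_ker n X x = supp_in {(u, d). d \<in> diagrams n \<and> Bset X x d \<and> Jset (X - {x}) d}"

definition D_diff :: "int set \<Rightarrow> int \<Rightarrow> nat \<Rightarrow> (int list \<times> diagram \<Rightarrow> 'r::comm_ring_1) \<Rightarrow> (int list \<times> diagram \<Rightarrow> 'r)" where
  "D_diff X x i F = (\<lambda>(s, d). \<Sum>t \<in> {t \<in> tuples X x (Suc i). butlast t = s}. F (t, d))"

definition D_aug :: "int set \<Rightarrow> int \<Rightarrow> (int list \<times> diagram \<Rightarrow> 'r::comm_ring_1) \<Rightarrow> (unit \<times> diagram \<Rightarrow> 'r)" where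
  "D_aug X x F = (\<lambda>(u, d). \<Sum>t \<in> tuples X x 0. F (t, d))"

end

theory Submission
  imports Defs
begin

lemma diag_part: "d \<in> diagrams n \<Longrightarrow> partition_on (nodes n) d"
  by (simp add: diagrams_def)

lemma blk_unique:
  assumes "d \<in> diagrams n" "B1 \<in> d" "B2 \<in> d" "a \<in> B1" "a \<in> B2" shows "B1 = B2"
  using assms by (auto simp: diagrams_def partition_on_def disjoint_def)

lemma blk_trans: "d \<in> diagrams n \<Longrightarrow> blk d a b \<Longrightarrow> blk d b c \<Longrightarrow> blk d a c"
  unfolding blk_def using blk_unique[of d n] by blast

lemma blk_sym: "blk d a b \<Longrightarrow> blk d b a"
  unfolding blk_def by blast

lemma Mset_blk: "Mset (insert x Y) d \<Longrightarrow> y \<in> Y \<Longrightarrow> blk d x y"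
  unfolding Mset_def blk_def by blast

lemma Mset_mono: "Mset Y d \<Longrightarrow> Z \<subseteq> Y \<Longrightarrow> Mset Z d"
  unfolding Mset_def by blast

lemma Mset_ext: "d \<in> diagrams n \<Longrightarrow> Mset (insert x Y) d \<Longrightarrow> blk d x y \<Longrightarrow> Mset (insert x (insert y Y)) d"
proof -
  assume d: "d \<in> diagrams n" and M: "Mset (insert x Y) d" and b: "blk d x y"
  from M obtain B where B: "B \<in> d" "insert x Y \<subseteq> B" unfolding Mset_def by blast
  from b obtain C where C: "C \<in> d" "x \<in> C" "y \<in> C" unfolding blk_def by blast
  have "B = C" using blk_unique[OF d B(1) C(1)] B C by blast
  then show ?thesis using B C unfolding Mset_def by blast
qed

lemma finite_tuples: "finite X \<Longrightarrow> finite (tuples X x i)"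
proof -
  assume "finite X"
  have "tuples X x i \<subseteq> {xs. set xs \<subseteq> X \<and> length xs = Suc i}" by (auto simp: tuples_def)
  then show ?thesis using finite_lists_length_eq[OF \<open>finite X\<close>] finite_subset by blast
qed

lemma tuple_last:
  assumes "t \<in> tuples X x i"
  shows "butlast t @ [last t] = t" "last t \<in> X - insert x (set (butlast t))"
proof -
  have ne: "t \<noteq> []" using assms by (auto simp: tuples_def)
  show e: "butlast t @ [last t] = t" using ne by simp
  have "distinct t" using assms by (simp add: tuples_def)
  then have "distinct (butlast t @ [last t])" using e by simp
  then have "last t \<notin> set (butlast t)" by simp
  moreover have "last t \<in> set t" using ne by simp
  then have "last t \<in> X - {x}" using assms by (auto simp: tuples_def)
  ultimately show "last t \<in> X - insert x (set (butlast t))" by blast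
qed

lemma tuple_butlast: "t \<in> tuples X x (Suc i) \<Longrightarrow> butlast t \<in> tuples X x i"
  unfolding tuples_def using in_set_butlastD by (fastforce simp: distinct_butlast)
lemma sum_single:
  assumes "finite A" "a \<in> A" "\<And>t. t \<in> A \<Longrightarrow> t \<noteq> a \<Longrightarrow> f t = 0"
  shows "sum f A = f a"
proof -
  have "sum f A = f a + sum f (A - {a})" by (rule sum.remove[OF assms(1,2)])
  also have "sum f (A - {a}) = 0" using assms(3) by (intro sum.neutral) auto
  finally show ?thesis by simp
qed
lemma set_bl: "s \<noteq> [] \<Longrightarrow> set s = insert (last s) (set (butlast s))"
  by (induct s rule: rev_induct) auto

lemma single_blk:
  assumes d: "d \<in> diagrams n" and "{z} \<in> d" and "blk d x z" shows "x = z"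
proof -
  from assms(3) obtain C where C: "C \<in> d" "x \<in> C" "z \<in> C" unfolding blk_def by blast
  have "C = {z}" using blk_unique[OF d C(1) assms(2)] C by blast
  then show ?thesis using C by blast
qed

lemma nJ_butlast:
  assumes d: "d \<in> diagrams n" and s: "s \<in> tuples X x k" and M: "Mset (insert x (set s)) d"
    and nJ: "\<not> Jset (X - insert x (set s)) d"
    and none: "\<forall>y\<in>X - insert x (set s). \<not> blk d x y"
  shows "\<not> Jset (X - insert x (set (butlast s))) d"
proof
  assume J: "Jset (X - insert x (set (butlast s))) d"
  have ne: "s \<noteq> []" using s by (auto simp: tuples_def)
  have sl: "set s = insert (last s) (set (butlast s))" using set_bl[OF ne] .
  have lX: "last s \<in> X - insert x (set (butlast s))" using tuple_last(2)[OF s] .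
  have bxl: "blk d x (last s)" using Mset_blk[OF M] ne by simp
  have Zs: "z \<in> X - insert x (set s)" if "z \<in> X - insert x (set (butlast s))" "z \<noteq> last s" for z
    using that sl by blast
  show False
  proof (cases "\<exists>z\<in>X - insert x (set (butlast s)). {z} \<in> d")
    case True
    then obtain z where z: "z \<in> X - insert x (set (butlast s))" "{z} \<in> d" by blast
    show False
    proof (cases "z = last s")
      case True
      then have "x = last s" using single_blk[OF d _ bxl] z by simp
      then show False using lX by blast
    next
      case False
      then show False using nJ Zs[OF z(1)] z(2) unfolding Jset_def by blast
    qed
  next
    case False
    then obtain z1 z2 where z: "z1 \<in> X - insert x (set (butlast s))" "z2 \<in> X - insert x (set (butlast s))"
      "z1 \<noteq> z2" "blk d z1 z2" using J unfolding Jset_def by blast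
    show False
    proof (cases "z1 = last s")
      case True
      then have "blk d x z2" using blk_trans[OF d bxl] z(4) by simp
      moreover have "z2 \<noteq> last s" using True z(3) by simp
      ultimately show False using none Zs[OF z(2)] by blast
    next
      case n1: False
      show False
      proof (cases "z2 = last s")
        case True
        then have "blk d x z1" using blk_trans[OF d bxl] blk_sym[OF z(4)] by simp
        then show False using none Zs[OF z(1) n1] by blast
      next
        case False
        then show False using nJ Zs[OF z(1) n1] Zs[OF z(2)] z(3,4) unfolding Jset_def by blast
      qed
    qed
  qed
qed

lemma uniq_from_nJ:
  assumes d: "d \<in> diagrams n" and nJ: "\<not> Jset Z d"
    and "y \<in> Z" "z \<in> Z" "blk d x y" "blk d x z"
  shows "y = z"
proof (rule ccontr)
  assume "y \<noteq> z"
  moreover have "blk d y z" using blk_trans[OF d blk_sym[OF assms(5)] assms(6)] .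
  ultimately show False using nJ assms(3,4) unfolding Jset_def by blast
qed

lemma exact_step:
  fixes v :: "int list \<times> diagram \<Rightarrow> 'r::comm_ring_1"
  assumes fin: "finite X"
  and v: "v \<in> D_car n X x k"
  and H: "\<And>s d. s \<in> tuples X x k \<Longrightarrow> d \<in> diagrams n \<Longrightarrow> Mset (insert x (set s)) d \<Longrightarrow>
            \<not> Jset (X - insert x (set (butlast s))) d \<Longrightarrow>
            (\<Sum>t\<in>{t\<in>tuples X x k. butlast t = butlast s}. v (t, d)) = 0"
  shows "\<exists>u\<in>D_car n X x (Suc k). (\<lambda>a. v a - D_diff X x k u a) \<in> D_ker n X x k"
proof -
  define u where "u = (\<lambda>(t, d). if t \<in> tuples X x (Suc k) \<and> Mset (insert x (set t)) d then v (butlast t, d) else (0::'r))"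
  have vD: "s \<in> tuples X x k \<and> d \<in> diagrams n \<and> Mset (insert x (set s)) d" if "v (s,d) \<noteq> 0" for s d
    using v that by (auto simp: D_car_def supp_in_def)
  have uD: "u \<in> D_car n X x (Suc k)"
    unfolding D_car_def supp_in_def u_def using vD by auto
  moreover have "(\<lambda>a. v a - D_diff X x k u a) \<in> D_ker n X x k"
    unfolding D_ker_def supp_in_def
  proof (rule CollectI, intro allI impI)
    fix a assume ne: "v a - D_diff X x k u a \<noteq> 0"
    obtain s d where a: "a = (s,d)" by fastforce
    let ?T = "{t \<in> tuples X x (Suc k). butlast t = s}"
    have finT: "finite ?T" using finite_tuples[OF fin] by simp
    have Dd: "D_diff X x k u (s,d) = (\<Sum>t\<in>?T. u (t,d))" by (simp add: D_diff_def)
    have vne: "v (s,d) \<noteq> 0"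
    proof
      assume v0: "v (s,d) = 0"
      have "(\<Sum>t\<in>?T. u (t,d)) = 0" by (rule sum.neutral) (auto simp: u_def v0)
      with ne a Dd v0 show False by simp
    qed
    then have s: "s \<in> tuples X x k" and d: "d \<in> diagrams n" and M: "Mset (insert x (set s)) d"
      using vD by auto
    have "Jset (X - insert x (set s)) d"
    proof (rule ccontr)
      assume nJ: "\<not> Jset (X - insert x (set s)) d"
      show False
      proof (cases "\<exists>y \<in> X - insert x (set s). blk d x y")
        case True
        then obtain y where y: "y \<in> X - insert x (set s)" "blk d x y" by blast
        have sy: "s @ [y] \<in> ?T" using s y by (auto simp: tuples_def)
        have "(\<Sum>t\<in>?T. u (t,d)) = u (s @ [y], d)"
        proof (rule sum_single[OF finT sy])
          fix t assume t: "t \<in> ?T" "t \<noteq> s @ [y]"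
          show "u (t, d) = 0"
          proof (rule ccontr)
            assume "u (t,d) \<noteq> 0"
            then have Mt: "Mset (insert x (set t)) d" by (auto simp: u_def split: if_splits)
            have tt: "s @ [last t] = t" "last t \<in> X - insert x (set s)"
              using tuple_last[of t X x "Suc k"] t(1) by simp_all
            have "last t \<in> set t" using t(1) by (intro last_in_set) (auto simp: tuples_def)
            then have "blk d x (last t)" using Mset_blk[OF Mt] by blast
            then have "last t = y" using uniq_from_nJ[OF d nJ tt(2) y(1) _ y(2)] by simp
            then show False using tt(1) t(2) by auto
          qed
        qed
        also have "\<dots> = v (s, d)"
        proof -
          have "Mset (insert x (insert y (set s))) d" using Mset_ext[OF d M y(2)] .
          then show ?thesis using sy by (simp add: u_def)
        qed
        finally show False using ne a Dd by simp
      next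
        case False
        have "(\<Sum>t\<in>?T. u (t,d)) = 0"
        proof (rule sum.neutral, intro ballI)
          fix t assume t: "t \<in> ?T"
          show "u (t, d) = 0"
          proof (rule ccontr)
            assume "u (t,d) \<noteq> 0"
            then have Mt: "Mset (insert x (set t)) d" by (auto simp: u_def split: if_splits)
            have tt: "s @ [last t] = t" "last t \<in> X - insert x (set s)"
              using tuple_last[of t X x "Suc k"] t(1) by simp_all
            have "last t \<in> set t" using t(1) by (intro last_in_set) (auto simp: tuples_def)
            then have "blk d x (last t)" using Mset_blk[OF Mt] by blast
            then show False using False tt(2) by blast
          qed
        qed
        moreover have "v (s, d) = 0"
        proof -
          have nJ': "\<not> Jset (X - insert x (set (butlast s))) d"
            using nJ_butlast[OF d s M nJ] False by blast
          let ?T' = "{t\<in>tuples X x k. butlast t = butlast s}"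
          have "(\<Sum>t\<in>?T'. v (t, d)) = v (s, d)"
          proof (rule sum_single)
            show "finite ?T'" using finite_tuples[OF fin] by simp
            show "s \<in> ?T'" using s by simp
            fix t assume t: "t \<in> ?T'" "t \<noteq> s"
            show "v (t, d) = 0"
            proof (rule ccontr)
              assume "v (t, d) \<noteq> 0"
              then have Mt: "Mset (insert x (set t)) d" using vD by blast
              have tt: "butlast s @ [last t] = t" "last t \<in> X - insert x (set (butlast s))"
                using tuple_last[of t X x k] t(1) by simp_all
              have ss: "butlast s @ [last s] = s" using tuple_last(1)[OF s] .
              have "last t \<in> set t" using t(1) by (intro last_in_set) (auto simp: tuples_def)
            then have bl: "blk d x (last t)" using Mset_blk[OF Mt] by blast
              have lt: "last t \<noteq> last s"
              proof
                assume lts: "last t = last s"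
                have "t = butlast s @ [last t]" using tt(1) by (rule sym)
                also have "\<dots> = butlast s @ [last s]" by (simp only: lts)
                also have "\<dots> = s" by (rule ss)
                finally have "t = s" .
                then show False using t(2) by simp
              qed
              have ses: "set s = insert (last s) (set (butlast s))"
                using set_bl[of s] s unfolding tuples_def by force
              have "last t \<in> X - insert x (set s)" using tt(2) lt unfolding ses by blast
              then show False using False bl by blast
            qed
          qed
          then show ?thesis using H[OF s d M nJ'] by simp
        qed
        ultimately show False using ne a Dd by simp
      qed
    qed
    then show "a \<in> {(t, d). t \<in> tuples X x k \<and> d \<in> diagrams n \<and>
       Mset (insert x (set t)) d \<and> Jset (X - insert x (set t)) d}" using a s d M by simp
  qed
  ultimately show ?thesis by blast
qed

lemma part1_surj:
  assumes fin: "finite X"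
  shows "sq_surj (D_car n X x 0) (B_car n X x) (B_ker n X x) (D_aug X x :: _ \<Rightarrow> unit \<times> diagram \<Rightarrow> 'r::comm_ring_1)"
  unfolding sq_surj_def
proof
  fix v :: "unit \<times> diagram \<Rightarrow> 'r" assume v: "v \<in> B_car n X x"
  define u where "u = (\<lambda>(t,d). if t \<in> tuples X x 0 \<and> Mset (insert x (set t)) d then v ((),d) else (0::'r))"
  have vB: "d \<in> diagrams n \<and> Bset X x d" if "v (w,d) \<noteq> 0" for w d
    using v that by (auto simp: B_car_def supp_in_def)
  have "u \<in> D_car n X x 0" unfolding D_car_def supp_in_def u_def using vB by auto
  moreover have "(\<lambda>a. v a - D_aug X x u a) \<in> B_ker n X x"
    unfolding B_ker_def supp_in_def
  proof (rule CollectI, intro allI impI)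
    fix a assume ne: "v a - D_aug X x u a \<noteq> 0"
    obtain w d where a: "a = (w,d)" by (rule prod.exhaust)
    have w: "w = ()" by simp
    have Da: "D_aug X x u (w,d) = (\<Sum>t\<in>tuples X x 0. u (t,d))" by (simp add: D_aug_def)
    have vne: "v (w,d) \<noteq> 0"
    proof
      assume v0: "v (w,d) = 0"
      have "(\<Sum>t\<in>tuples X x 0. u (t,d)) = 0" by (rule sum.neutral) (use v0 w in \<open>auto simp: u_def\<close>)
      with ne a Da v0 show False by simp
    qed
    then have d: "d \<in> diagrams n" and Bs: "Bset X x d" using vB by auto
    have "Jset (X - {x}) d"
    proof (rule ccontr)
      assume nJ: "\<not> Jset (X - {x}) d"
      from Bs obtain y where y: "y \<in> X" "y \<noteq> x" "blk d x y" unfolding Bset_def by blast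
      have ty: "[y] \<in> tuples X x 0" using y by (simp add: tuples_def)
      have "(\<Sum>t\<in>tuples X x 0. u (t,d)) = u ([y], d)"
      proof (rule sum_single[OF finite_tuples[OF fin] ty])
        fix t assume t: "t \<in> tuples X x 0" "t \<noteq> [y]"
        show "u (t,d) = 0"
        proof (rule ccontr)
          assume "u (t,d) \<noteq> 0"
          then have Mt: "Mset (insert x (set t)) d" by (auto simp: u_def split: if_splits)
          obtain z where tz: "t = [z]" using t(1) unfolding tuples_def by (auto simp: length_Suc_conv)
          have z: "z \<in> X - {x}" using t(1) tz by (simp add: tuples_def)
          have "blk d x z" using Mset_blk[OF Mt] tz by simp
          then have "z = y" using uniq_from_nJ[OF d nJ z _ _ y(3)] y by blast
          then show False using t(2) tz by simp
        qed
      qed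
      also have "\<dots> = v ((), d)"
      proof -
        have "Mset (insert x (set [y])) d" using y(3) unfolding Mset_def blk_def by auto
        then show ?thesis using ty by (simp add: u_def)
      qed
      finally show False using ne a Da w by simp
    qed
    then show "a \<in> {(u, d). d \<in> diagrams n \<and> Bset X x d \<and> Jset (X - {x}) d}" using a d Bs by simp
  qed
  ultimately show "\<exists>u\<in>D_car n X x 0. (\<lambda>a. v a - D_aug X x u a) \<in> B_ker n X x" by blast
qed

lemma part1_b_i:
  "\<forall>u\<in>D_car n X x 1. D_aug X x (D_diff X x 0 u) \<in> (B_ker n X x :: (unit \<times> diagram \<Rightarrow> 'r::comm_ring_1) set)"
proof
  fix u :: "int list \<times> diagram \<Rightarrow> 'r" assume u: "u \<in> D_car n X x 1"
  show "D_aug X x (D_diff X x 0 u) \<in> B_ker n X x"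
    unfolding B_ker_def supp_in_def
  proof (rule CollectI, intro allI impI)
    fix a assume ne: "D_aug X x (D_diff X x 0 u) a \<noteq> 0"
    obtain w d where a: "a = (w,d)" by (rule prod.exhaust)
    have "(\<Sum>t\<in>tuples X x 0. \<Sum>t'\<in>{t'\<in>tuples X x (Suc 0). butlast t' = t}. u (t', d)) \<noteq> 0"
      using ne a by (simp add: D_aug_def D_diff_def)
    then obtain t where t: "t \<in> tuples X x 0" "(\<Sum>t'\<in>{t'\<in>tuples X x (Suc 0). butlast t' = t}. u (t', d)) \<noteq> 0"
      by (rule sum.not_neutral_contains_not_neutral)
    obtain t'' where t'': "t'' \<in> {t'\<in>tuples X x (Suc 0). butlast t' = t}" "u (t'', d) \<noteq> 0"
      using t(2) by (rule sum.not_neutral_contains_not_neutral)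
    then have t': "t'' \<in> tuples X x (Suc 0)" "u (t'', d) \<noteq> 0" by auto
    then have d: "d \<in> diagrams n" and Mt: "Mset (insert x (set t'')) d"
      using u by (auto simp: D_car_def supp_in_def)
    have len: "length t'' = Suc (Suc 0)" using t'(1) by (simp add: tuples_def)
    obtain p q where pq: "t'' = [p, q]" using len by (metis length_0_conv length_Suc_conv)
    have pX: "p \<in> X - {x}" "q \<in> X - {x}" "p \<noteq> q" using t'(1) pq by (auto simp: tuples_def)
    have bp: "blk d x p" "blk d x q" using Mset_blk[OF Mt] pq by auto
    have "Bset X x d" using pX bp unfolding Bset_def by blast
    moreover have "Jset (X - {x}) d" using pX blk_trans[OF d blk_sym[OF bp(1)] bp(2)] unfolding Jset_def by blast
    ultimately show "a \<in> {(u, d). d \<in> diagrams n \<and> Bset X x d \<and> Jset (X - {x}) d}" using a d by simp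
  qed
qed

lemma part1_c_i:
  "\<forall>u\<in>D_car n X x (Suc (Suc i)). D_diff X x i (D_diff X x (Suc i) u) \<in> (D_ker n X x i :: (int list \<times> diagram \<Rightarrow> 'r::comm_ring_1) set)"
proof
  fix u :: "int list \<times> diagram \<Rightarrow> 'r" assume u: "u \<in> D_car n X x (Suc (Suc i))"
  show "D_diff X x i (D_diff X x (Suc i) u) \<in> D_ker n X x i"
    unfolding D_ker_def supp_in_def
  proof (rule CollectI, intro allI impI)
    fix a assume ne: "D_diff X x i (D_diff X x (Suc i) u) a \<noteq> 0"
    obtain s d where a: "a = (s,d)" by fastforce
    have "(\<Sum>t\<in>{t\<in>tuples X x (Suc i). butlast t = s}. \<Sum>t'\<in>{t'\<in>tuples X x (Suc (Suc i)). butlast t' = t}. u (t', d)) \<noteq> 0"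
      using ne a by (simp add: D_diff_def)
    then obtain t where t: "t \<in> {t\<in>tuples X x (Suc i). butlast t = s}" "(\<Sum>t'\<in>{t'\<in>tuples X x (Suc (Suc i)). butlast t' = t}. u (t', d)) \<noteq> 0"
      by (rule sum.not_neutral_contains_not_neutral)
    obtain t' where t': "t' \<in> {t'\<in>tuples X x (Suc (Suc i)). butlast t' = t}" "u (t', d) \<noteq> 0"
      using t(2) by (rule sum.not_neutral_contains_not_neutral)
    have tt: "t \<in> tuples X x (Suc i)" "butlast t = s" using t(1) by auto
    have tt': "t' \<in> tuples X x (Suc (Suc i))" "butlast t' = t" using t'(1) by auto
    have d: "d \<in> diagrams n" and Mt: "Mset (insert x (set t')) d"
      using u t'(2) by (auto simp: D_car_def supp_in_def)
    have s: "s \<in> tuples X x i" using tuple_butlast[OF tt(1)] tt(2) by simp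
    have la: "s @ [last t] = t" "last t \<in> X - insert x (set s)" using tuple_last[OF tt(1)] tt(2) by auto
    have lb: "t @ [last t'] = t'" "last t' \<in> X - insert x (set t)" using tuple_last[OF tt'(1)] tt'(2) by auto
    have st': "set t' = insert (last t') (insert (last t) (set s))"
      using la(1) lb(1) by (metis Un_insert_right append_Nil2 insert_commute set_append set_simps(2))
    have M: "Mset (insert x (set s)) d" using Mset_mono[OF Mt] st' by blast
    have ba: "blk d x (last t)" "blk d x (last t')" using Mset_blk[OF Mt] st' by auto
    have ab: "last t \<noteq> last t'" using lb(2) la(1) by auto
    have sst: "set t = insert (last t) (set s)" using arg_cong[OF la(1), of set] by simp
    have "last t' \<in> X - insert x (set s)" using lb(2) sst by auto
    then have "Jset (X - insert x (set s)) d"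
      using la(2) ab blk_trans[OF d blk_sym[OF ba(1)] ba(2)] unfolding Jset_def by blast
    then show "a \<in> {(t, d). t \<in> tuples X x i \<and> d \<in> diagrams n \<and> Mset (insert x (set t)) d \<and> Jset (X - insert x (set t)) d}"
      using a s d M by simp
  qed
qed

lemma part1_b_ii:
  assumes fin: "finite X"
  shows "\<forall>v\<in>D_car n X x 0. D_aug X x v \<in> (B_ker n X x :: (unit \<times> diagram \<Rightarrow> 'r::comm_ring_1) set) \<longrightarrow>
     (\<exists>u\<in>D_car n X x 1. (\<lambda>a. v a - D_diff X x 0 u a) \<in> D_ker n X x 0)"
proof (intro ballI impI)
  fix v :: "int list \<times> diagram \<Rightarrow> 'r" assume v: "v \<in> D_car n X x 0" and g: "D_aug X x v \<in> B_ker n X x"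
  have "\<exists>u\<in>D_car n X x (Suc 0). (\<lambda>a. v a - D_diff X x 0 u a) \<in> D_ker n X x 0"
  proof (rule exact_step[OF fin v])
    fix s d assume s: "s \<in> tuples X x 0" and d: "d \<in> diagrams n" and M: "Mset (insert x (set s)) d"
      and nJ: "\<not> Jset (X - insert x (set (butlast s))) d"
    have bs: "butlast s = []" using s by (auto simp: tuples_def length_Suc_conv)
    have setEq: "{t\<in>tuples X x 0. butlast t = butlast s} = tuples X x 0"
      using bs by (auto simp: tuples_def length_Suc_conv)
    have nJ': "\<not> Jset (X - {x}) d" using nJ bs by simp
    have "D_aug X x v ((), d) = 0"
    proof (rule ccontr)
      assume "D_aug X x v ((), d) \<noteq> 0"
      then have "((), d) \<in> {(u, d). d \<in> diagrams n \<and> Bset X x d \<and> Jset (X - {x}) d}"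
        using g unfolding B_ker_def supp_in_def by blast
      then show False using nJ' by simp
    qed
    then show "(\<Sum>t\<in>{t\<in>tuples X x 0. butlast t = butlast s}. v (t, d)) = 0"
      unfolding setEq by (simp add: D_aug_def)
  qed
  then show "\<exists>u\<in>D_car n X x 1. (\<lambda>a. v a - D_diff X x 0 u a) \<in> D_ker n X x 0" by simp
qed

lemma part1_c_ii:
  assumes fin: "finite X"
  shows "\<forall>v\<in>D_car n X x (Suc i). D_diff X x i v \<in> (D_ker n X x i :: (int list \<times> diagram \<Rightarrow> 'r::comm_ring_1) set) \<longrightarrow>
     (\<exists>u\<in>D_car n X x (Suc (Suc i)). (\<lambda>a. v a - D_diff X x (Suc i) u a) \<in> D_ker n X x (Suc i))"
proof (intro ballI impI)
  fix v :: "int list \<times> diagram \<Rightarrow> 'r" assume v: "v \<in> D_car n X x (Suc i)" and g: "D_diff X x i v \<in> D_ker n X x i"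
  show "\<exists>u\<in>D_car n X x (Suc (Suc i)). (\<lambda>a. v a - D_diff X x (Suc i) u a) \<in> D_ker n X x (Suc i)"
  proof (rule exact_step[OF fin v])
    fix s d assume s: "s \<in> tuples X x (Suc i)" and d: "d \<in> diagrams n" and M: "Mset (insert x (set s)) d"
      and nJ: "\<not> Jset (X - insert x (set (butlast s))) d"
    have "D_diff X x i v (butlast s, d) = 0"
    proof (rule ccontr)
      assume "D_diff X x i v (butlast s, d) \<noteq> 0"
      then have "(butlast s, d) \<in> {(t, d). t \<in> tuples X x i \<and> d \<in> diagrams n \<and> Mset (insert x (set t)) d \<and> Jset (X - insert x (set t)) d}"
        using g unfolding D_ker_def supp_in_def by blast
      then show False using nJ by simp
    qed
    then show "(\<Sum>t\<in>{t\<in>tuples X x (Suc i). butlast t = butlast s}. v (t, d)) = 0"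
      by (simp add: D_diff_def)
  qed
qed

definition pblk :: "int set \<Rightarrow> int set" where
  "pblk B = uminus ` (B \<inter> {0<..}) \<union> (B \<inter> {0<..})"

definition proj :: "diagram \<Rightarrow> diagram" where
  "proj d = {pblk B | B. B \<in> d \<and> B \<inter> {0<..} \<noteq> {}}"

lemma mem_pblk: "c \<in> pblk B \<longleftrightarrow> c \<noteq> 0 \<and> \<bar>c\<bar> \<in> B"
proof
  assume "c \<in> pblk B"
  then show "c \<noteq> 0 \<and> \<bar>c\<bar> \<in> B" unfolding pblk_def by auto
next
  assume c: "c \<noteq> 0 \<and> \<bar>c\<bar> \<in> B"
  show "c \<in> pblk B"
  proof (cases "c > 0")
    case True then show ?thesis using c unfolding pblk_def by auto
  next
    case False
    then have "- c \<in> B \<inter> {0<..}" using c by auto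
    then have "- (- c) \<in> uminus ` (B \<inter> {0<..})" by blast
    then show ?thesis unfolding pblk_def by simp
  qed
qed

lemma nodes_iff: "a \<in> nodes n \<longleftrightarrow> a \<noteq> 0 \<and> \<bar>a\<bar> \<le> int n"
  by (simp add: nodes_def)

lemma diag_sub: "d \<in> diagrams n \<Longrightarrow> B \<in> d \<Longrightarrow> B \<subseteq> nodes n"
  by (auto simp: diagrams_def partition_on_def)

lemma diag_cover: "d \<in> diagrams n \<Longrightarrow> a \<in> nodes n \<Longrightarrow> \<exists>B\<in>d. a \<in> B"
  by (auto simp: diagrams_def partition_on_def)

lemma diag_ne: "d \<in> diagrams n \<Longrightarrow> B \<in> d \<Longrightarrow> B \<noteq> {}"
  by (auto simp: diagrams_def partition_on_def)

lemma proj_diag: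
  assumes d: "d \<in> diagrams n" shows "proj d \<in> diagrams n"
  unfolding diagrams_def
proof (rule CollectI, rule partition_onI)
  show "\<Union>(proj d) = nodes n"
  proof
    show "\<Union>(proj d) \<subseteq> nodes n"
    proof
      fix c assume "c \<in> \<Union>(proj d)"
      then obtain B where B: "B \<in> d" "c \<in> pblk B" unfolding proj_def by blast
      then have "\<bar>c\<bar> \<in> nodes n" "c \<noteq> 0" using diag_sub[OF d B(1)] mem_pblk by blast+
      then show "c \<in> nodes n" by (simp add: nodes_iff)
    qed
  next
    show "nodes n \<subseteq> \<Union>(proj d)"
    proof
      fix c assume c: "c \<in> nodes n"
      then have "\<bar>c\<bar> \<in> nodes n" by (simp add: nodes_iff)
      then obtain B where B: "B \<in> d" "\<bar>c\<bar> \<in> B" using diag_cover[OF d] by blast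
      have c0: "c \<noteq> 0" using c by (simp add: nodes_iff)
      then have "\<bar>c\<bar> \<in> B \<inter> {0<..}" using B by simp
      then have "pblk B \<in> proj d" using B unfolding proj_def by blast
      moreover have "c \<in> pblk B" using B c0 mem_pblk by blast
      ultimately show "c \<in> \<Union>(proj d)" by blast
    qed
  qed
next
  fix p q assume p: "p \<in> proj d" and q: "q \<in> proj d" and pq: "p \<noteq> q"
  from p obtain B1 where B1: "B1 \<in> d" "p = pblk B1" unfolding proj_def by blast
  from q obtain B2 where B2: "B2 \<in> d" "q = pblk B2" unfolding proj_def by blast
  show "disjnt p q"
  proof (rule ccontr)
    assume "\<not> disjnt p q"
    then obtain c where "c \<in> p" "c \<in> q" unfolding disjnt_def by blast
    then have "\<bar>c\<bar> \<in> B1" "\<bar>c\<bar> \<in> B2" using B1 B2 mem_pblk by blast+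
    then have "B1 = B2" using blk_unique[OF d B1(1) B2(1)] by blast
    then show False using pq B1 B2 by simp
  qed
next
  show "{} \<notin> proj d"
  proof
    assume "{} \<in> proj d"
    then obtain B where B: "B \<in> d" "B \<inter> {0<..} \<noteq> {}" "pblk B = {}" unfolding proj_def by blast
    then obtain c where "c \<in> B" "c > 0" by blast
    then have "c \<in> pblk B" using mem_pblk by simp
    then show False using B by simp
  qed
qed

lemma blk_proj: "blk (proj d) a b \<Longrightarrow> blk d \<bar>a\<bar> \<bar>b\<bar>"
  unfolding blk_def proj_def using mem_pblk by blast

lemma proj_blk_pos:
  assumes "blk d a b" "0 < a" "0 < b" shows "blk (proj d) a b"
proof -
  from assms(1) obtain B where B: "B \<in> d" "a \<in> B" "b \<in> B" unfolding blk_def by blast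
  then have "pblk B \<in> proj d" using assms(2) unfolding proj_def by blast
  moreover have "a \<in> pblk B" "b \<in> pblk B" using B assms(2,3) mem_pblk by auto
  ultimately show ?thesis unfolding blk_def by blast
qed

lemma proj_blk_mid:
  assumes d: "d \<in> diagrams n" and j: "j \<in> {1..int n}" shows "blk (proj d) (- j) j"
proof -
  have "j \<in> nodes n" using j by (simp add: nodes_iff)
  then obtain B where B: "B \<in> d" "j \<in> B" using diag_cover[OF d] by blast
  moreover have "j \<in> B \<inter> {0<..}" using B j by auto
  ultimately have "pblk B \<in> proj d" unfolding proj_def by blast
  moreover have "j \<in> pblk B" "- j \<in> pblk B" using B j mem_pblk by auto
  ultimately show ?thesis unfolding blk_def by blast
qed

lemma snd_emb1: "snd (emb1 a) = a" by (simp add: emb1_def)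
lemma snd_emb2: "snd (emb2 a) = \<bar>a\<bar>" by (simp add: emb2_def)
lemma snd_outer: "snd (outer a) = a" by (simp add: outer_def)

lemma sc_blk:
  assumes d: "d \<in> diagrams n" and pq: "(p, q) \<in> stack_conn d (proj d)"
  shows "blk d (snd p) (snd q)"
proof -
  let ?E = "{(emb1 a, emb1 b) | a b. blk d a b} \<union> {(emb2 a, emb2 b) | a b. blk (proj d) a b}"
  have E: "blk d (snd p') (snd q')" if "(p', q') \<in> ?E" for p' q'
    using that snd_emb1 snd_emb2 blk_proj by auto
  from pq have "(p, q) \<in> ?E\<^sup>+" unfolding stack_conn_def .
  then show ?thesis
  proof (induction rule: trancl_induct)
    case (base y) then show ?case using E by blast
  next
    case (step y z) then show ?case using E blk_trans[OF d] by blast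
  qed
qed

lemma blk_sc:
  assumes d: "d \<in> diagrams n" and b: "blk d a b"
  shows "(outer a, outer b) \<in> stack_conn d (proj d)"
proof -
  let ?E = "{(emb1 a, emb1 b) | a b. blk d a b} \<union> {(emb2 a, emb2 b) | a b. blk (proj d) a b}"
  have nodes: "c \<in> nodes n" if "c = a \<or> c = b" for c
    using b that diag_sub[OF d] unfolding blk_def by blast
  have l: "(outer c, emb1 c) \<in> ?E\<^sup>*" if c: "c \<in> nodes n" for c
  proof (cases "c < 0")
    case True then show ?thesis by (simp add: outer_def emb1_def)
  next
    case False
    then have c1: "c \<in> {1..int n}" using c by (auto simp: nodes_iff)
    have "blk (proj d) c (- c)" using blk_sym[OF proj_blk_mid[OF d c1]] .
    then have e: "(emb2 c, emb2 (- c)) \<in> ?E" by blast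
    have eq1: "emb2 c = outer c" and eq2: "emb2 (- c) = emb1 c" using False c1
      by (auto simp: outer_def emb1_def emb2_def)
    from e have "(outer c, emb1 c) \<in> ?E" by (simp only: eq1 eq2)
    then show ?thesis by (rule r_into_rtrancl)
  qed
  have r: "(emb1 c, outer c) \<in> ?E\<^sup>*" if c: "c \<in> nodes n" for c
  proof (cases "c < 0")
    case True then show ?thesis by (simp add: outer_def emb1_def)
  next
    case False
    then have c1: "c \<in> {1..int n}" using c by (auto simp: nodes_iff)
    have "blk (proj d) (- c) c" using proj_blk_mid[OF d c1] .
    then have e: "(emb2 (- c), emb2 c) \<in> ?E" by blast
    have eq1: "emb2 c = outer c" and eq2: "emb2 (- c) = emb1 c" using False c1
      by (auto simp: outer_def emb1_def emb2_def)
    from e have "(emb1 c, outer c) \<in> ?E" by (simp only: eq1 eq2)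
    then show ?thesis by (rule r_into_rtrancl)
  qed
  have m: "(emb1 a, emb1 b) \<in> ?E\<^sup>+" using b by blast
  have "(outer a, outer b) \<in> ?E\<^sup>+"
    using rtrancl_trancl_trancl[OF l[OF nodes] trancl_rtrancl_trancl[OF m r[OF nodes]]] by blast
  then show ?thesis unfolding stack_conn_def .
qed

lemma mid_sc:
  assumes d: "d \<in> diagrams n" and j: "j \<in> {1..int n}"
  shows "((1, j), outer j) \<in> stack_conn d (proj d)"
proof -
  have "(emb2 (- j), emb2 j) \<in> {(emb2 a, emb2 b) | a b. blk (proj d) a b}"
    using proj_blk_mid[OF d j] by blast
  moreover have eq1: "emb2 (- j) = (1, j)" and eq2: "emb2 j = outer j" using j by (auto simp: emb2_def outer_def)
  ultimately have "((1, j), outer j) \<in> {(emb2 a, emb2 b) | a b. blk (proj d) a b}" by (simp only: eq1 eq2)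
  then show ?thesis unfolding stack_conn_def by blast
qed

lemma comp_proj:
  assumes d: "d \<in> diagrams n" shows "diag_comp n d (proj d) = d"
proof -
  have key: "{b \<in> nodes n. (outer a, outer b) \<in> stack_conn d (proj d)} = B"
    if B: "B \<in> d" "a \<in> B" for a B
  proof
    show "{b \<in> nodes n. (outer a, outer b) \<in> stack_conn d (proj d)} \<subseteq> B"
    proof
      fix b assume "b \<in> {b \<in> nodes n. (outer a, outer b) \<in> stack_conn d (proj d)}"
      then have "blk d a b" using sc_blk[OF d] snd_outer by fastforce
      then obtain C where C: "C \<in> d" "a \<in> C" "b \<in> C" unfolding blk_def by blast
      then show "b \<in> B" using blk_unique[OF d B(1) C(1)] B by blast
    qed
  next
    show "B \<subseteq> {b \<in> nodes n. (outer a, outer b) \<in> stack_conn d (proj d)}"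
    proof
      fix b assume "b \<in> B"
      then have "blk d a b" "b \<in> nodes n" using B diag_sub[OF d] unfolding blk_def by blast+
      then show "b \<in> {b \<in> nodes n. (outer a, outer b) \<in> stack_conn d (proj d)}" using blk_sc[OF d] by blast
    qed
  qed
  show ?thesis
  proof
    show "diag_comp n d (proj d) \<subseteq> d"
    proof
      fix C assume "C \<in> diag_comp n d (proj d)"
      then obtain a where a: "a \<in> nodes n" "C = {b \<in> nodes n. (outer a, outer b) \<in> stack_conn d (proj d)}"
        unfolding diag_comp_def by blast
      obtain B where B: "B \<in> d" "a \<in> B" using diag_cover[OF d a(1)] by blast
      show "C \<in> d" using key[OF B] a(2) B(1) by simp
    qed
  next
    show "d \<subseteq> diag_comp n d (proj d)"
    proof
      fix B assume B: "B \<in> d"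
      then obtain a where a: "a \<in> B" using diag_ne[OF d] by blast
      then have "a \<in> nodes n" using diag_sub[OF d B] by blast
      then show "B \<in> diag_comp n d (proj d)" unfolding diag_comp_def using key[OF B a] by blast
    qed
  qed
qed

lemma loops_proj:
  assumes d: "d \<in> diagrams n" shows "loops n d (proj d) = 0"
proof -
  have E: "{stack_conn d (proj d) `` {(1, j)} | j.
      j \<in> {1..int n} \<and> (\<forall>b \<in> nodes n. ((1, j), outer b) \<notin> stack_conn d (proj d))} = {}"
  proof -
    have "\<not> (\<forall>b \<in> nodes n. ((1, j), outer b) \<notin> stack_conn d (proj d))" if j: "j \<in> {1..int n}" for j
    proof -
      have "j \<in> nodes n" using j by (simp add: nodes_iff)
      then show ?thesis using mid_sc[OF d j] by blast
    qed
    then show ?thesis by blast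
  qed
  show ?thesis unfolding loops_def by (simp only: E card.empty)
qed

lemma nonperm:
  assumes "B \<in> d" "a \<in> B" "b \<in> B" "a \<noteq> b" "0 < a" "0 < b"
  shows "\<not> perm_diagram n d"
proof
  assume "perm_diagram n d"
  then obtain i j where "B = {- i, j}" "i \<in> {1..int n}" using assms(1) unfolding perm_diagram_def by blast
  then show False using assms(2-6) by auto
qed

lemma finite_nodes: "finite (nodes n)"
proof -
  have "nodes n \<subseteq> {- int n..int n}" by (auto simp: nodes_def)
  then show ?thesis using finite_subset by blast
qed

lemma finite_diagrams: "finite (diagrams n)"
proof -
  have "diagrams n \<subseteq> Pow (Pow (nodes n))" using diag_sub by blast
  then show ?thesis using finite_subset finite_nodes by blast
qed

lemma dact_ind:
  fixes t :: 'i
  assumes d': "d' \<in> diagrams n" and cg: "diag_comp n e d' = g" and l: "loops n e d' = 0"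
  shows "dact n \<delta> e (\<lambda>z. if z = (t, d') then 1 else 0) = (\<lambda>z. if z = (t, g) then (1::'r::comm_ring_1) else 0)"
proof (rule ext)
  fix z :: "'i \<times> diagram"
  obtain t0 g0 where z: "z = (t0, g0)" by (rule prod.exhaust)
  let ?A = "{d \<in> diagrams n. diag_comp n e d = g0}"
  have fin: "finite ?A" using finite_diagrams by simp
  have ev: "dact n \<delta> e (\<lambda>z. if z = (t, d') then 1 else 0) (t0, g0)
      = (\<Sum>d\<in>?A. \<delta> ^ loops n e d * (if (t0, d) = (t, d') then 1 else 0))"
    by (simp add: dact_def)
  show "dact n \<delta> e (\<lambda>z. if z = (t, d') then 1 else 0) z = (if z = (t, g) then 1 else 0)"
  proof (cases "z = (t, g)")
    case True
    then have tg: "t0 = t" "g0 = g" using z by auto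
    have "d' \<in> ?A" using d' cg tg by simp
    then have "(\<Sum>d\<in>?A. \<delta> ^ loops n e d * (if (t0, d) = (t, d') then 1 else 0)) =
        \<delta> ^ loops n e d' * (if (t0, d') = (t, d') then 1 else 0)"
      by (rule sum_single[OF fin]) auto
    then show ?thesis using ev z True tg l by simp
  next
    case False
    have "(\<Sum>d\<in>?A. \<delta> ^ loops n e d * (if (t0, d) = (t, d') then 1 else 0)) = 0"
    proof (rule sum.neutral, rule ballI)
      fix d assume "d \<in> ?A"
      then show "\<delta> ^ loops n e d * (if (t0, d) = (t, d') then 1 else 0) = 0"
        using False z cg by auto
    qed
    then show ?thesis using ev z False by simp
  qed
qed

lemma ind_in_triv:
  assumes d: "d \<in> diagrams n" and S: "(t, proj d) \<in> S"
    and B: "B \<in> d" "a \<in> B" "b \<in> B" "a \<noteq> b" "0 < a" "0 < b"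
  shows "(\<lambda>z. if z = (t, d) then (1::'r::comm_ring_1) else 0) \<in> triv_rel n \<delta> (supp_in S)"
proof -
  let ?v = "\<lambda>z. if z = (t, proj d) then (1::'r) else 0"
  have v: "?v \<in> supp_in S" using S by (auto simp: supp_in_def)
  have tr: "triv n d = (0::'r)" using nonperm[OF B] by (simp add: triv_def)
  have "dact n \<delta> d ?v = (\<lambda>z. if z = (t, d) then 1 else 0)"
    using dact_ind[OF proj_diag[OF d] comp_proj[OF d] loops_proj[OF d]] .
  then have eq: "(\<lambda>z. dact n \<delta> d ?v z - triv n d * ?v z) = (\<lambda>z. if z = (t, d) then 1 else 0)"
    using tr by simp
  have "(\<lambda>z. dact n \<delta> d ?v z - triv n d * ?v z) \<in> triv_rel n \<delta> (supp_in S)"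
    unfolding triv_rel_def
  proof (rule rspan.gen, rule CollectI, intro exI conjI)
    show "(\<lambda>z. dact n \<delta> d ?v z - triv n d * ?v z) = (\<lambda>a. dact n \<delta> d ?v a - triv n d * ?v a)" by (rule refl)
  qed (use d v in auto)
  then show ?thesis using eq by simp
qed

lemma rspan_supp:
  assumes "finite F" "\<forall>a\<in>F. (\<lambda>z. if z = a then (1::'r::comm_ring_1) else 0) \<in> rspan G"
    "\<forall>z. v z \<noteq> 0 \<longrightarrow> z \<in> F"
  shows "v \<in> rspan G"
  using assms
proof (induction F arbitrary: v rule: finite_induct)
  case empty
  then have "v = (\<lambda>_. 0)" by auto
  then show ?case using rspan.zero by simp
next
  case (insert a F v)
  let ?w = "\<lambda>z. v z - v a * (if z = a then 1 else 0)"
  have supp: "\<forall>z. ?w z \<noteq> 0 \<longrightarrow> z \<in> F" using insert.prems(2) by auto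
  have pF: "\<forall>b\<in>F. (\<lambda>z. if z = b then (1::'r) else 0) \<in> rspan G" using insert.prems(1) by blast
  have w: "?w \<in> rspan G" by (rule insert.IH[OF pF supp])
  have "(\<lambda>z. v a * (if z = a then (1::'r) else 0)) \<in> rspan G"
    using insert.prems(1) by (intro rspan.smult) blast
  then have "(\<lambda>z. ?w z + v a * (if z = a then (1::'r) else 0)) \<in> rspan G"
    using w by (rule rspan.add[rotated])
  then show ?case by simp
qed

lemma supp_triv:
  assumes fin: "finite S"
    and H: "\<And>t d. (t, d) \<in> S \<Longrightarrow> d \<in> diagrams n \<and> (t, proj d) \<in> S \<and>
              (\<exists>B\<in>d. \<exists>a b. a \<in> B \<and> b \<in> B \<and> a \<noteq> b \<and> 0 < a \<and> 0 < b)"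
  shows "supp_in S \<subseteq> (triv_rel n \<delta> (supp_in S) :: ('i \<times> diagram \<Rightarrow> 'r::comm_ring_1) set)"
proof
  fix v :: "'i \<times> diagram \<Rightarrow> 'r" assume v: "v \<in> supp_in S"
  have "\<forall>p\<in>S. (\<lambda>z. if z = p then (1::'r) else 0) \<in> triv_rel n \<delta> (supp_in S)"
  proof
    fix p assume p: "p \<in> S"
    obtain t d where td: "p = (t, d)" by (rule prod.exhaust)
    have "(t, d) \<in> S" using p td by simp
    from H[OF this] obtain B a b where h: "d \<in> diagrams n" "(t, proj d) \<in> S"
      "B \<in> d" "a \<in> B" "b \<in> B" "a \<noteq> b" "0 < a" "0 < b" by blast
    show "(\<lambda>z. if z = p then (1::'r) else 0) \<in> triv_rel n \<delta> (supp_in S)"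
      unfolding td by (rule ind_in_triv[OF h])
  qed
  then have all': "\<forall>p\<in>S. (\<lambda>z. if z = p then (1::'r) else 0) \<in> rspan {(\<lambda>a. dact n \<delta> e v a - triv n e * v a) | e v. e \<in> diagrams n \<and> v \<in> supp_in S}"
    unfolding triv_rel_def .
  have vs: "\<forall>z. v z \<noteq> 0 \<longrightarrow> z \<in> S" using v by (simp add: supp_in_def)
  show "v \<in> triv_rel n \<delta> (supp_in S)" unfolding triv_rel_def by (rule rspan_supp[OF fin all' vs])
qed

lemma K_sub: "k \<in> K \<Longrightarrow> k \<in> tensor_triv_ker n \<delta> A K"
  unfolding tensor_triv_ker_def ksum_def
proof (rule CollectI, intro exI conjI)
  show "k = (\<lambda>a. k a + (\<lambda>_. 0) a)" by simp
qed (auto intro: rspan.zero simp: triv_rel_def)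

lemma A_sub: "v \<in> A \<Longrightarrow> A \<subseteq> triv_rel n \<delta> A \<Longrightarrow> (\<lambda>_. 0) \<in> K \<Longrightarrow> v \<in> tensor_triv_ker n \<delta> A K"
  unfolding tensor_triv_ker_def ksum_def
proof (rule CollectI, intro exI conjI)
  show "v = (\<lambda>a. (\<lambda>_. 0) a + v a)" by simp
qed auto

lemma gen_exact:
  assumes "\<forall>u\<in>A1. g (f u) \<in> K3" "(\<lambda>_. 0) \<in> A1" "f (\<lambda>_. 0) = (\<lambda>_. 0)"
    "A2 \<subseteq> tensor_triv_ker n \<delta> A2 K2"
  shows "sq_exact A1 A2 (tensor_triv_ker n \<delta> A2 K2) (tensor_triv_ker n \<delta> A3 K3) f g"
  unfolding sq_exact_def
proof (intro conjI ballI impI)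
  fix u assume "u \<in> A1" then show "g (f u) \<in> tensor_triv_ker n \<delta> A3 K3" using assms(1) K_sub by blast
next
  fix v assume v: "v \<in> A2"
  have "(\<lambda>a. v a - f (\<lambda>_. 0) a) = v" using assms(3) by simp
  then show "\<exists>u\<in>A1. (\<lambda>a. v a - f u a) \<in> tensor_triv_ker n \<delta> A2 K2"
    using assms(2,4) v by (intro bexI[of _ "\<lambda>_. 0"]) auto
qed

lemma gen_surj:
  assumes "(\<lambda>_. 0) \<in> A1" "f (\<lambda>_. 0) = (\<lambda>_. 0)" "A2 \<subseteq> K'"
  shows "sq_surj A1 A2 K' f"
  unfolding sq_surj_def
proof
  fix v assume v: "v \<in> A2"
  have "(\<lambda>a. v a - f (\<lambda>_. 0) a) = v" using assms(2) by simp
  then show "\<exists>u\<in>A1. (\<lambda>a. v a - f u a) \<in> K'"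
    using assms(1,3) v by (intro bexI[of _ "\<lambda>_. 0"]) auto
qed

lemma D_in:
  assumes X: "X \<subseteq> {1..int n}" and x: "x \<in> X"
  shows "D_car n X x i \<subseteq> (triv_rel n \<delta> (D_car n X x i) :: (int list \<times> diagram \<Rightarrow> 'r::comm_ring_1) set)"
  unfolding D_car_def
proof (rule supp_triv)
  have fin: "finite X" using X finite_subset by blast
  have "{(t, d). t \<in> tuples X x i \<and> d \<in> diagrams n \<and> Mset (insert x (set t)) d} \<subseteq> tuples X x i \<times> diagrams n"
    by auto
  then show "finite {(t, d). t \<in> tuples X x i \<and> d \<in> diagrams n \<and> Mset (insert x (set t)) d}"
    by (rule finite_subset[OF _ finite_cartesian_product[OF finite_tuples[OF fin] finite_diagrams]])
next
  fix t d assume "(t, d) \<in> {(t, d). t \<in> tuples X x i \<and> d \<in> diagrams n \<and> Mset (insert x (set t)) d}"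
  then have t: "t \<in> tuples X x i" and d: "d \<in> diagrams n" and M: "Mset (insert x (set t)) d" by auto
  from M obtain B where B: "B \<in> d" "insert x (set t) \<subseteq> B" unfolding Mset_def by blast
  have pos: "0 < c" if "c \<in> insert x (set t)" for c
    using that t x X by (auto simp: tuples_def)
  have tne: "t \<noteq> []" using t by (auto simp: tuples_def)
  have hX: "hd t \<in> X - {x}" using t tne hd_in_set by (auto simp: tuples_def)
  have "\<exists>B\<in>d. \<exists>a b. a \<in> B \<and> b \<in> B \<and> a \<noteq> b \<and> 0 < a \<and> 0 < b"
  proof (intro bexI[OF _ B(1)] exI conjI)
    show "x \<in> B" "hd t \<in> B" using B(2) tne hd_in_set by auto
    show "x \<noteq> hd t" using hX by auto
    show "0 < x" "0 < hd t" using pos tne hd_in_set by auto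
  qed
  moreover have "Mset (insert x (set t)) (proj d)"
  proof -
    have "x \<in> B \<inter> {0<..}" using B pos by auto
    then have "pblk B \<in> proj d" using B(1) unfolding proj_def by blast
    moreover have "insert x (set t) \<subseteq> pblk B"
    proof
      fix c assume c: "c \<in> insert x (set t)"
      then have "0 < c" "c \<in> B" using pos B(2) by auto
      then show "c \<in> pblk B" using mem_pblk by simp
    qed
    ultimately show ?thesis unfolding Mset_def by blast
  qed
  ultimately show "d \<in> diagrams n \<and> (t, proj d) \<in> {(t, d). t \<in> tuples X x i \<and> d \<in> diagrams n \<and> Mset (insert x (set t)) d} \<and>
      (\<exists>B\<in>d. \<exists>a b. a \<in> B \<and> b \<in> B \<and> a \<noteq> b \<and> 0 < a \<and> 0 < b)"
    using d t proj_diag[OF d] by simp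
qed

lemma B_in:
  assumes X: "X \<subseteq> {1..int n}" and x: "x \<in> X"
  shows "B_car n X x \<subseteq> (triv_rel n \<delta> (B_car n X x) :: (unit \<times> diagram \<Rightarrow> 'r::comm_ring_1) set)"
  unfolding B_car_def
proof (rule supp_triv)
  have "{(u, d). d \<in> diagrams n \<and> Bset X x d} \<subseteq> (UNIV :: unit set) \<times> diagrams n" by auto
  then show "finite {(u :: unit, d). d \<in> diagrams n \<and> Bset X x d}"
    using finite_subset finite_diagrams by fastforce
next
  fix t :: unit and d assume "(t, d) \<in> {(u, d). d \<in> diagrams n \<and> Bset X x d}"
  then have d: "d \<in> diagrams n" and Bs: "Bset X x d" by auto
  from Bs obtain y where y: "y \<in> X" "y \<noteq> x" "blk d x y" unfolding Bset_def by blast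
  from y(3) obtain B where B: "B \<in> d" "x \<in> B" "y \<in> B" unfolding blk_def by blast
  have pos: "0 < x" "0 < y" using x y X by auto
  have "\<exists>B\<in>d. \<exists>a b. a \<in> B \<and> b \<in> B \<and> a \<noteq> b \<and> 0 < a \<and> 0 < b"
    using B y pos by blast
  moreover have "Bset X x (proj d)" using proj_blk_pos[OF y(3) pos] y unfolding Bset_def by blast
  ultimately show "d \<in> diagrams n \<and> (t, proj d) \<in> {(u, d). d \<in> diagrams n \<and> Bset X x d} \<and>
      (\<exists>B\<in>d. \<exists>a b. a \<in> B \<and> b \<in> B \<and> a \<noteq> b \<and> 0 < a \<and> 0 < b)"
    using d proj_diag[OF d] by simp
qed

lemma aug0: "D_aug X x (\<lambda>_. 0) = (\<lambda>_. (0::'r::comm_ring_1))"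
  by (rule ext) (simp add: D_aug_def split: prod.split)

lemma diff0: "D_diff X x i (\<lambda>_. 0) = (\<lambda>_. (0::'r::comm_ring_1))"
  by (rule ext) (simp add: D_diff_def split: prod.split)

lemma p1b_lemma:
  assumes fin: "finite X"
  shows "sq_exact (D_car n X x 1) (D_car n X x 0) (D_ker n X x 0) (B_ker n X x)
           (D_diff X x 0) (D_aug X x :: _ \<Rightarrow> unit \<times> diagram \<Rightarrow> 'r::comm_ring_1)"
  unfolding sq_exact_def using part1_b_i part1_b_ii[OF fin] by blast

lemma p1c_lemma:
  assumes fin: "finite X"
  shows "\<forall>i. sq_exact (D_car n X x (Suc (Suc i))) (D_car n X x (Suc i)) (D_ker n X x (Suc i))
           (D_ker n X x i) (D_diff X x (Suc i)) (D_diff X x i :: _ \<Rightarrow> int list \<times> diagram \<Rightarrow> 'r::comm_ring_1)"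
  unfolding sq_exact_def using part1_c_i part1_c_ii[OF fin] by blast

theorem proposition4p11:
  fixes n :: nat and \<delta> :: "'r::comm_ring_1" and X :: "int set" and x :: int
  assumes "X \<subseteq> {1..int n}" and "x \<in> X"
  shows
    "(sq_surj (D_car n X x 0) (B_car n X x) (B_ker n X x) (D_aug X x :: _ \<Rightarrow> unit \<times> diagram \<Rightarrow> 'r)
      \<and> sq_exact (D_car n X x 1) (D_car n X x 0) (D_ker n X x 0) (B_ker n X x)
           (D_diff X x 0) (D_aug X x)
      \<and> (\<forall>i. sq_exact (D_car n X x (Suc (Suc i))) (D_car n X x (Suc i)) (D_ker n X x (Suc i))
           (D_ker n X x i) (D_diff X x (Suc i)) (D_diff X x i)))
   \<and>
    (sq_surj (D_car n X x 0) (B_car n X x)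
        (tensor_triv_ker n \<delta> (B_car n X x) (B_ker n X x)) (D_aug X x)
      \<and> sq_exact (D_car n X x 1) (D_car n X x 0)
           (tensor_triv_ker n \<delta> (D_car n X x 0) (D_ker n X x 0))
           (tensor_triv_ker n \<delta> (B_car n X x) (B_ker n X x))
           (D_diff X x 0) (D_aug X x)
      \<and> (\<forall>i. sq_exact (D_car n X x (Suc (Suc i))) (D_car n X x (Suc i))
           (tensor_triv_ker n \<delta> (D_car n X x (Suc i)) (D_ker n X x (Suc i)))
           (tensor_triv_ker n \<delta> (D_car n X x i) (D_ker n X x i))
           (D_diff X x (Suc i)) (D_diff X x i)))"
proof -
  have fin: "finite X" using assms(1) finite_subset by blast
  have z0: "\<And>S. (\<lambda>_. 0) \<in> supp_in S" by (simp add: supp_in_def)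
  have p1b: "sq_exact (D_car n X x 1) (D_car n X x 0) (D_ker n X x 0) (B_ker n X x)
           (D_diff X x 0) (D_aug X x :: _ \<Rightarrow> unit \<times> diagram \<Rightarrow> 'r)"
    unfolding sq_exact_def using part1_b_i part1_b_ii[OF fin] by blast
  have p1c: "\<forall>i. sq_exact (D_car n X x (Suc (Suc i))) (D_car n X x (Suc i)) (D_ker n X x (Suc i))
           (D_ker n X x i) (D_diff X x (Suc i)) (D_diff X x i :: _ \<Rightarrow> int list \<times> diagram \<Rightarrow> 'r)"
    unfolding sq_exact_def using part1_c_i part1_c_ii[OF fin] by blast
  have DT: "\<And>i. D_car n X x i \<subseteq> (tensor_triv_ker n \<delta> (D_car n X x i) (D_ker n X x i) :: (int list \<times> diagram \<Rightarrow> 'r) set)"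
  proof
    fix i v assume "v \<in> (D_car n X x i :: (int list \<times> diagram \<Rightarrow> 'r) set)"
    moreover have "(\<lambda>_. 0) \<in> (D_ker n X x i :: (int list \<times> diagram \<Rightarrow> 'r) set)" by (simp add: D_ker_def z0)
    ultimately show "v \<in> tensor_triv_ker n \<delta> (D_car n X x i) (D_ker n X x i)"
      using A_sub D_in[OF assms] by blast
  qed
  have BT: "B_car n X x \<subseteq> (tensor_triv_ker n \<delta> (B_car n X x) (B_ker n X x) :: (unit \<times> diagram \<Rightarrow> 'r) set)"
  proof
    fix v assume "v \<in> (B_car n X x :: (unit \<times> diagram \<Rightarrow> 'r) set)"
    moreover have "(\<lambda>_. 0) \<in> (B_ker n X x :: (unit \<times> diagram \<Rightarrow> 'r) set)" by (simp add: B_ker_def z0)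
    ultimately show "v \<in> tensor_triv_ker n \<delta> (B_car n X x) (B_ker n X x)"
      using A_sub B_in[OF assms] by blast
  qed
  have p2a: "sq_surj (D_car n X x 0) (B_car n X x)
        (tensor_triv_ker n \<delta> (B_car n X x) (B_ker n X x)) (D_aug X x :: _ \<Rightarrow> unit \<times> diagram \<Rightarrow> 'r)"
    apply (rule gen_surj)
      apply (simp add: D_car_def z0)
     apply (rule aug0)
    apply (rule BT)
    done
  have p2b: "sq_exact (D_car n X x 1) (D_car n X x 0)
           (tensor_triv_ker n \<delta> (D_car n X x 0) (D_ker n X x 0))
           (tensor_triv_ker n \<delta> (B_car n X x) (B_ker n X x))
           (D_diff X x 0) (D_aug X x :: _ \<Rightarrow> unit \<times> diagram \<Rightarrow> 'r)"
    apply (rule gen_exact)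
       apply (rule part1_b_i)
      apply (simp add: D_car_def z0)
     apply (rule diff0)
    apply (rule DT)
    done
  have p2c: "\<forall>i. sq_exact (D_car n X x (Suc (Suc i))) (D_car n X x (Suc i))
           (tensor_triv_ker n \<delta> (D_car n X x (Suc i)) (D_ker n X x (Suc i)))
           (tensor_triv_ker n \<delta> (D_car n X x i) (D_ker n X x i))
           (D_diff X x (Suc i)) (D_diff X x i :: _ \<Rightarrow> int list \<times> diagram \<Rightarrow> 'r)"
  proof
    fix i
    show "sq_exact (D_car n X x (Suc (Suc i))) (D_car n X x (Suc i))
           (tensor_triv_ker n \<delta> (D_car n X x (Suc i)) (D_ker n X x (Suc i)))
           (tensor_triv_ker n \<delta> (D_car n X x i) (D_ker n X x i))
           (D_diff X x (Suc i)) (D_diff X x i :: _ \<Rightarrow> int list \<times> diagram \<Rightarrow> 'r)"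
      apply (rule gen_exact)
         apply (rule part1_c_i)
        apply (simp add: D_car_def z0)
       apply (rule diff0)
      apply (rule DT)
      done
  qed
  show ?thesis
    apply (intro conjI)
         apply (rule part1_surj[OF fin])
        apply (rule p1b_lemma[OF fin])
       apply (rule p1c_lemma[OF fin])
      apply (rule p2a)
     apply (rule p2b)
    apply (rule p2c)
    done
qed

end
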